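(* Let $\epsilon>0$ and $t_n=n(\log n)^{3/4}$. Then $$\lambda\left(\sum_{i=1}^n a_i\,\mathbb 1_{\{t_n\le a_i\le \epsilon n\log n\}}\ge 3\epsilon\, n\log n\ \text{for infinitely many } n\right)=0.$$
   Context: Let $\lambda$ be Lebesgue measure on $[0,1)$, $\tau(x)=2x\bmod1$, $\chi(x)=\lfloor1/x\rfloor$ (with $\chi(0)=\infty$), $a_n=\chi\circ\tau^{n-1}$. Logarithms are natural. *)

theory Defs
  imports "HOL-Analysis.Analysis"
begin

definition tau :: "real \<Rightarrow> real" where
  "tau x = frac (2 * x)"

definition chi :: "real \<Rightarrow> ereal" where
  "chi x = (if x = 0 then \<infinity> else ereal (real_of_int \<lfloor>1 / x\<rfloor>))"

definition digit :: "nat \<Rightarrow> real \<Rightarrow> ereal" where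
  "digit n x = chi ((tau ^^ (n - 1)) x)"

definition tn :: "nat \<Rightarrow> real" where
  "tn n = real n * (ln (real n)) powr (3/4)"

text \<open>Trimmed sum \<Sum>_{i=1}^n a_i 1{t_n \<le> a_i \<le> \<epsilon> n log n}
  (the indicator is 0 when a_i = \<infinity>, so the term is 0 then).\<close>
definition trimmed_sum :: "real \<Rightarrow> nat \<Rightarrow> real \<Rightarrow> ereal" where
  "trimmed_sum \<epsilon> n x =
     (\<Sum>i=1..n. if ereal (tn n) \<le> digit i x \<and> digit i x \<le> ereal (\<epsilon> * real n * ln (real n))
                then digit i x else 0)"

end

theory Submission
  imports Defs
begin

lemma tau_iter: "0 \<le> x \<Longrightarrow> x < 1 \<Longrightarrow> (tau ^^ m) x = frac (2^m * x)"
proof (induction m)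
  case 0 then show ?case by (simp add: frac_eq)
next
  case (Suc m)
  have "frac (2 * frac u) = frac (2 * u)" for u :: real
  proof -
    have "2 * frac u = 2*u + of_int (- 2 * \<lfloor>u\<rfloor>)" by (simp add: frac_def algebra_simps)
    then show ?thesis by (metis frac_add_of_int_right)
  qed
  then show ?case using Suc by (simp add: tau_def mult.assoc)
qed

definition Ival :: "nat \<Rightarrow> nat \<Rightarrow> real \<Rightarrow> nat \<Rightarrow> nat \<Rightarrow> real set" where
  "Ival a d \<delta> m p = {(m + p / 2^d) / 2^a .. (m + (p + \<delta>) / 2^d) / 2^a}"

definition Aset :: "nat \<Rightarrow> nat \<Rightarrow> real \<Rightarrow> real set" where
  "Aset a d \<delta> = (\<Union>m\<in>{..<(2::nat)^a}. \<Union>p\<in>{1..nat \<lfloor>2^d * \<delta>\<rfloor>}. Ival a d \<delta> m p)"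

lemma Aset_sets: "Aset a d \<delta> \<in> sets lborel"
  unfolding Aset_def Ival_def by (intro sets.finite_UN) auto

lemma Aset_sets'[simp]: "Aset a d \<delta> \<in> sets borel"
  using Aset_sets by simp

lemma Aset_fin: "emeasure lborel (Aset a d \<delta>) < \<infinity>"
  unfolding Aset_def Ival_def
  by (intro emeasure_bounded_finite compact_imp_bounded compact_UN) auto

lemma Aset_cover:
  fixes x \<delta> :: real
  assumes x: "0 \<le> x" "x < 1" and d: "0 \<le> \<delta>"
    and h1: "frac (2^a * x) \<le> \<delta>" and h2: "frac (2^(a+d) * x) \<le> \<delta>"
    and h3: "frac (2^(a+d) * x) \<noteq> 2^d * frac (2^a * x)"
  shows "x \<in> Aset a d \<delta>"
proof -
  define m where "m = \<lfloor>2^a * x\<rfloor>"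
  define y where "y = frac (2^a * x)"
  have m0: "m \<ge> 0" unfolding m_def using x by simp
  have "2^a * x < 2^a" using x by simp
  then have mlt: "m < 2^a" unfolding m_def by (simp add: floor_less_iff)
  have xy: "2^a * x = m + y" unfolding m_def y_def frac_def by simp
  have y0: "0 \<le> y" "y \<le> \<delta>" using h1 by (auto simp: y_def)
  define z where "z = 2^d * y"
  have "2^(a+d) * x = z + of_int (2^d * m)"
  proof -
    have "2^(a+d) * x = 2^d * (2^a * x)" by (simp add: power_add)
    also have "\<dots> = 2^d * (m + y)" by (simp add: xy)
    finally show ?thesis by (simp add: algebra_simps z_def)
  qed
  then have fz: "frac (2^(a+d) * x) = frac z" by (metis frac_add_of_int_right)
  define p where "p = \<lfloor>z\<rfloor>"
  have z0: "z \<ge> 0" using y0 by (simp add: z_def)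
  have "p \<noteq> 0"
  proof
    assume "p = 0" then have "frac z = z" using z0 by (simp add: frac_def p_def)
    then show False using h3 fz by (simp add: z_def y_def)
  qed
  moreover have "p \<ge> 0" using z0 by (simp add: p_def)
  ultimately have p1: "p \<ge> 1" by simp
  have "z \<le> 2^d * \<delta>" using y0 by (simp add: z_def)
  then have pP: "p \<le> \<lfloor>2^d * \<delta>\<rfloor>" unfolding p_def by (rule floor_mono)
  have zp: "z - p \<le> \<delta>" using h2 fz by (simp add: frac_def p_def)
  have pz: "p \<le> z" unfolding p_def by simp
  have "x \<in> Ival a d \<delta> (nat m) (nat p)"
  proof -
    have e1: "real (nat m) = m" "real (nat p) = p" using m0 p1 by auto
    have x_eq: "x = (m + z / 2^d) / 2^a" using xy by (simp add: z_def field_simps)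
    have i1: "p/2^d \<le> z/2^d" using pz by (simp add: divide_right_mono)
    have i2: "z/2^d \<le> (p+\<delta>)/2^d" using zp by (intro divide_right_mono) auto
    show ?thesis unfolding Ival_def e1 x_eq
      using i1 i2 by (auto intro!: divide_right_mono)
  qed
  moreover have "nat m \<in> {..<(2::nat)^a}" using mlt m0
    by (metis lessThan_iff nat_less_iff of_nat_numeral of_nat_power)
  moreover have "nat p \<in> {1..nat \<lfloor>2^d * \<delta>\<rfloor>}" using p1 pP by auto
  ultimately show ?thesis unfolding Aset_def by blast
qed

lemma Aset_meas: assumes "\<delta> \<ge> 0" shows "measure lborel (Aset a d \<delta>) \<le> \<delta>^2"
proof -
  let ?P = "nat \<lfloor>2^d * \<delta>\<rfloor>"
  have mI: "measure lborel (Ival a d \<delta> m p) = \<delta> / 2^d / 2^a" for m p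
    unfolding Ival_def using assms by (simp add: measure_def divide_simps)
  have "measure lborel (Aset a d \<delta>) \<le> (\<Sum>m\<in>{..<(2::nat)^a}. measure lborel (\<Union>p\<in>{1..?P}. Ival a d \<delta> m p))"
    unfolding Aset_def by (rule measure_UNION_le) (auto simp: Ival_def intro!: sets.finite_UN)
  also have "\<dots> \<le> (\<Sum>m\<in>{..<(2::nat)^a}. (\<Sum>p\<in>{1..?P}. measure lborel (Ival a d \<delta> m p)))"
    by (intro sum_mono measure_UNION_le) (auto simp: Ival_def)
  also have "\<dots> = 2^a * (?P * (\<delta> / 2^d / 2^a))" by (simp add: mI)
  also have "\<dots> = ?P * \<delta> / 2^d" by simp
  also have "\<dots> \<le> (2^d * \<delta>) * \<delta> / 2^d"
    using assms by (intro divide_right_mono mult_right_mono) auto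
  also have "\<dots> = \<delta>^2" by (simp add: power2_eq_square)
  finally show ?thesis .
qed

definition dl :: "nat \<Rightarrow> real" where "dl K = 1 / tn (2^K)"

definition Gset :: "nat \<Rightarrow> real set" where
  "Gset K = (\<Union>a\<in>{..<(2::nat)^(K+1)}. \<Union>d\<in>{..<(2::nat)^(K+1)}. Aset a d (dl K))"

lemma tn_pow: "tn (2^K) = 2^K * (real K * ln 2) powr (3/4)"
  unfolding tn_def by (simp add: ln_realpow)

lemma dl_nonneg: "dl K \<ge> 0" unfolding dl_def tn_pow by simp

lemma Gset_sets: "Gset K \<in> sets lborel"
  unfolding Gset_def by (intro sets.finite_UN Aset_sets) auto

lemma Gset_fin: "emeasure lborel (Gset K) < \<infinity>"
  unfolding Gset_def Aset_def Ival_def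
  by (intro emeasure_bounded_finite compact_imp_bounded compact_UN) auto

lemma Gset_meas: assumes "K \<ge> 1"
  shows "measure lborel (Gset K) \<le> 4 / (real K * ln 2) powr (3/2)"
proof -
  let ?N = "(2::nat)^(K+1)"
  have "measure lborel (Gset K) \<le> (\<Sum>a\<in>{..<?N}. measure lborel (\<Union>d\<in>{..<?N}. Aset a d (dl K)))"
    unfolding Gset_def by (rule measure_UNION_le) (auto intro!: sets.finite_UN Aset_sets)
  also have "\<dots> \<le> (\<Sum>a\<in>{..<?N}. (\<Sum>d\<in>{..<?N}. measure lborel (Aset a d (dl K))))"
    by (intro sum_mono measure_UNION_le) (auto intro: Aset_sets)
  also have "\<dots> \<le> (\<Sum>a\<in>{..<?N}. (\<Sum>d\<in>{..<?N}. (dl K)^2))"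
    by (intro sum_mono Aset_meas dl_nonneg)
  also have "\<dots> = (2^(K+1))^2 * (dl K)^2" by (simp add: power2_eq_square)
  also have "\<dots> = 4 / (real K * ln 2) powr (3/2)"
  proof -
    have pos: "real K * ln 2 > 0" using assms by simp
    have "((real K * ln 2) powr (3/4))^2 = (real K * ln 2) powr (3/2)"
      by (simp add: power2_eq_square powr_add[symmetric])
    then show ?thesis unfolding dl_def tn_pow using pos
      by (simp add: power_mult_distrib power_divide power_add field_simps)
  qed
  finally show ?thesis .
qed

lemma Gset_summable: "summable (\<lambda>k. measure lborel (Gset (Suc k)))"
proof (rule summable_comparison_test)
  show "\<exists>N. \<forall>n\<ge>N. norm (measure lborel (Gset (Suc n))) \<le> (4 * ln 2 powr (-3/2)) * real (Suc n) powr (-3/2)"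
  proof (intro exI allI impI)
    fix n :: nat
    have "norm (measure lborel (Gset (Suc n))) \<le> 4 / (real (Suc n) * ln 2) powr (3/2)"
      using Gset_meas[of "Suc n"] by simp
    also have "\<dots> = (4 * ln 2 powr (-3/2)) * real (Suc n) powr (-3/2)"
      by (simp add: powr_mult powr_minus divide_simps del: of_nat_Suc)
    finally show "norm (measure lborel (Gset (Suc n))) \<le> (4 * ln 2 powr (-3/2)) * real (Suc n) powr (-3/2)" .
  qed
  have "summable (\<lambda>n. real n powr (-3/2))" by (simp add: summable_real_powr_iff)
  then have "summable (\<lambda>n. real (Suc n) powr (-3/2))" by (subst summable_Suc_iff)
  then show "summable (\<lambda>n. (4 * ln 2 powr (-3/2)) * real (Suc n) powr (-3/2))"
    by (rule summable_mult)
qed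

lemma tn_mono: assumes "1 \<le> m" "m \<le> n" shows "tn m \<le> tn n"
  unfolding tn_def using assms
  by (intro mult_mono powr_mono2) auto

lemma geo_bound:
  fixes C :: real assumes "C \<ge> 0" "i1 \<ge> 1"
  shows "(\<Sum>i=1..n. (if i1 \<le> i then C * (1/2)^(i-i1) else 0)) \<le> 2 * C"
proof -
  have "(\<Sum>i=1..n. (if i1 \<le> i then C * (1/2)^(i-i1) else 0)) = (\<Sum>i\<in>{i1..n}. C * (1/2)^(i-i1))"
    using assms by (intro sum.mono_neutral_cong_right) auto
  also have "\<dots> = C * (\<Sum>i\<in>{i1..n}. (1/2)^(i-i1))" by (simp add: sum_distrib_left)
  also have "(\<Sum>i\<in>{i1..n}. (1/2::real)^(i-i1)) = (\<Sum>k\<in>(\<lambda>i. i-i1)`{i1..n}. (1/2)^k)"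
    by (subst sum.reindex) (auto simp: inj_on_def)
  also have "\<dots> \<le> 2" using geometric_sum_less[of "1/2::real" "(\<lambda>i. i-i1)`{i1..n}"] by simp
  finally show ?thesis using assms by (simp add: mult_left_mono)
qed

lemma key:
  fixes x \<epsilon> :: real and n K :: nat
  assumes x: "0 \<le> x" "x < 1" and K: "K \<ge> 1" "2^K \<le> n" "n < 2^(K+1)"
    and E2: "\<epsilon> * real n * ln (real n) > 2"
    and xG: "x \<notin> Gset K"
  shows "trimmed_sum \<epsilon> n x < ereal (3 * \<epsilon> * real n * ln (real n))"
proof -
  define E where "E = \<epsilon> * real n * ln (real n)"
  define y where "y i = frac (2^(i-1) * x)" for i :: nat
  define \<delta> where "\<delta> = dl K"
  have dig: "digit i x = chi (y i)" for i
    unfolding digit_def y_def using tau_iter[OF x] by simp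
  have y01: "0 \<le> y i" "y i < 1" for i unfolding y_def by (auto simp: frac_lt_1)
  have \<delta>0: "\<delta> \<ge> 0" unfolding \<delta>_def by (rule dl_nonneg)
  have sep: "y j = 2^(j-i) * y i" if "1 \<le> i" "i \<le> j" "j \<le> n" "y i \<le> \<delta>" "y j \<le> \<delta>" for i j
  proof (rule ccontr)
    assume ne: "y j \<noteq> 2^(j-i) * y i"
    have "x \<in> Aset (i-1) (j-i) \<delta>"
    proof (rule Aset_cover[OF x \<delta>0])
      show "frac (2^(i-1) * x) \<le> \<delta>" using that y_def by simp
      have "i - 1 + (j - i) = j - 1" using that by simp
      then show "frac (2^(i-1+(j-i)) * x) \<le> \<delta>" "frac (2^(i-1+(j-i)) * x) \<noteq> 2^(j-i) * frac (2^(i-1) * x)"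
        using that ne by (simp_all add: y_def)
    qed
    moreover have "i - 1 < 2^(K+1)" "j - i < 2^(K+1)" using that(2,3) K(3) by linarith+
    ultimately have "x \<in> Gset K" unfolding Gset_def \<delta>_def[symmetric] by blast
    then show False using xG by blast
  qed
  have tnpos: "tn (2^K) > 0" unfolding tn_pow using K by simp
  have tnle: "tn (2^K) \<le> tn n" using K by (intro tn_mono) auto
  define cond where "cond i \<longleftrightarrow> ereal (tn n) \<le> digit i x \<and> digit i x \<le> ereal E" for i
  have cond_prop: "y i > 0 \<and> digit i x = ereal (of_int \<lfloor>1 / y i\<rfloor>) \<and> y i \<le> \<delta> \<and> 1 / y i < E + 1"
    if "cond i" for i
  proof -
    have "y i \<noteq> 0"
    proof
      assume "y i = 0" then show False using that by (simp add: cond_def dig chi_def)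
    qed
    then have yp: "y i > 0" using y01[of i] by simp
    have dd: "digit i x = ereal (of_int \<lfloor>1 / y i\<rfloor>)" using \<open>y i \<noteq> 0\<close> by (simp add: dig chi_def)
    have c1: "tn n \<le> of_int \<lfloor>1 / y i\<rfloor>" "of_int \<lfloor>1 / y i\<rfloor> \<le> E"
      using that dd by (auto simp: cond_def)
    have "tn (2^K) \<le> 1 / y i" using c1 tnle of_int_floor_le[of "1 / y i"] by linarith
    then have "y i \<le> 1 / tn (2^K)" using yp tnpos by (simp add: field_simps)
    moreover have "1 / y i < E + 1" using c1 real_of_int_floor_add_one_gt[of "1 / y i"] by linarith
    ultimately show ?thesis using yp dd by (simp add: \<delta>_def dl_def)
  qed
  have E0: "E > 2" using E2 by (simp add: E_def)
  show ?thesis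
  proof (cases "\<exists>i\<in>{1..n}. cond i")
    case False
    then have "trimmed_sum \<epsilon> n x = 0"
      unfolding trimmed_sum_def by (intro sum.neutral) (auto simp: cond_def E_def)
    then show ?thesis using E0 by (simp add: E_def)
  next
    case True
    define i1 where "i1 = (LEAST i. 1 \<le> i \<and> i \<le> n \<and> cond i)"
    have i1P: "1 \<le> i1 \<and> i1 \<le> n \<and> cond i1"
    proof -
      obtain i0 where "i0 \<in> {1..n}" "cond i0" using True by blast
      then have "1 \<le> i0 \<and> i0 \<le> n \<and> cond i0" by simp
      then show ?thesis unfolding i1_def by (rule LeastI)
    qed
    have i1min: "i1 \<le> i" if "1 \<le> i" "i \<le> n" "cond i" for i
      unfolding i1_def using that by (intro Least_le) auto
    define g where "g i = (if i1 \<le> i then (E+1) * (1/2)^(i-i1) else 0)" for i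
    have tb: "(if cond i then digit i x else 0) \<le> ereal (g i)" if "i \<in> {1..n}" for i
    proof (cases "cond i")
      case False then show ?thesis using E0 by (simp add: g_def)
    next
      case c: True
      have ii: "i1 \<le> i" using i1min that c by auto
      have P1: "y i1 > 0" "1 / y i1 < E + 1" "y i1 \<le> \<delta>" using cond_prop[of i1] i1P by auto
      have Pi: "y i > 0" "digit i x = ereal (of_int \<lfloor>1 / y i\<rfloor>)" "y i \<le> \<delta>" using cond_prop[OF c] by auto
      have yi: "y i = 2^(i-i1) * y i1" using sep[of i1 i] i1P that ii P1 Pi by auto
      have "of_int \<lfloor>1 / y i\<rfloor> \<le> 1 / y i" by simp
      also have "1 / y i = (1 / y i1) * (1/2)^(i-i1)" using yi by (simp add: power_one_over)
      also have "\<dots> \<le> (E+1) * (1/2)^(i-i1)" using P1 by (intro mult_right_mono) auto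
      finally show ?thesis using c Pi ii by (simp add: g_def)
    qed
    have "trimmed_sum \<epsilon> n x = (\<Sum>i=1..n. (if cond i then digit i x else 0))"
      unfolding trimmed_sum_def cond_def E_def by simp
    also have "\<dots> \<le> (\<Sum>i=1..n. ereal (g i))" by (intro sum_mono tb)
    also have "\<dots> = ereal (\<Sum>i=1..n. g i)" by (simp add: sum_ereal)
    also have "\<dots> \<le> ereal (2 * (E + 1))"
    proof -
      have "(\<Sum>i=1..n. g i) \<le> 2 * (E + 1)" unfolding g_def
        using E0 i1P by (intro geo_bound) auto
      then show ?thesis by simp
    qed
    finally have "trimmed_sum \<epsilon> n x \<le> ereal (2 * (E + 1))" .
    also have "\<dots> < ereal (3 * E)" using E0 by simp
    finally show ?thesis by (simp add: E_def mult.assoc)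
  qed
qed

lemma ev_E:
  fixes \<epsilon> :: real assumes "\<epsilon> > 0"
  shows "\<exists>N0. \<forall>n\<ge>N0. \<epsilon> * real n * ln (real n) > 2"
proof -
  have "exp 1 \<le> (3::real)" using exp_le by simp
  define N0 where "N0 = max 3 (nat \<lceil>2 / \<epsilon>\<rceil> + 1)"
  have "\<epsilon> * real n * ln (real n) > 2" if "n \<ge> N0" for n
  proof -
    have n3: "real n \<ge> 3" using that by (simp add: N0_def)
    have "ln (real n) \<ge> 1"
      using n3 \<open>exp 1 \<le> 3\<close> by (subst ln_ge_iff) auto
    have "real n > 2 / \<epsilon>" using that unfolding N0_def by linarith
    then have "\<epsilon> * real n > 2" using assms by (simp add: field_simps)
    then show ?thesis using \<open>ln (real n) \<ge> 1\<close>
      by (smt (verit) mult_le_cancel_left1)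
  qed
  then show ?thesis by blast
qed

theorem mainTheorem6:
  fixes \<epsilon> :: real
  assumes "\<epsilon> > 0"
  shows "{x \<in> {0..<1}. \<exists>\<^sub>\<infinity> n. trimmed_sum \<epsilon> n x \<ge> ereal (3 * \<epsilon> * real n * ln (real n))}
           \<in> null_sets lebesgue"
proof -
  define A where "A k = Gset (Suc k)" for k
  have "limsup A \<in> null_sets lborel"
  proof (rule borel_cantelli_limsup1)
    show "A n \<in> sets lborel" for n unfolding A_def by (rule Gset_sets)
    show "emeasure lborel (A n) < \<infinity>" for n unfolding A_def by (rule Gset_fin)
    show "summable (\<lambda>n. measure lborel (A n))" unfolding A_def by (rule Gset_summable)
  qed
  then have nl: "limsup A \<in> null_sets lebesgue" by (rule null_sets_completionI)
  obtain N0 where N0: "\<And>n. n \<ge> N0 \<Longrightarrow> \<epsilon> * real n * ln (real n) > 2"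
    using ev_E[OF assms] by blast
  have "{x \<in> {0..<1}. \<exists>\<^sub>\<infinity> n. trimmed_sum \<epsilon> n x \<ge> ereal (3 * \<epsilon> * real n * ln (real n))} \<subseteq> limsup A"
  proof
    fix x assume "x \<in> {x \<in> {0..<1}. \<exists>\<^sub>\<infinity> n. trimmed_sum \<epsilon> n x \<ge> ereal (3 * \<epsilon> * real n * ln (real n))}"
    then have x: "0 \<le> x" "x < 1" and inf: "\<exists>\<^sub>\<infinity> n. trimmed_sum \<epsilon> n x \<ge> ereal (3 * \<epsilon> * real n * ln (real n))"
      by auto
    have "\<exists>m\<ge>k0. x \<in> A m" for k0
    proof -
      obtain n where n: "n > max N0 (2^(k0+1))" and tr: "trimmed_sum \<epsilon> n x \<ge> ereal (3 * \<epsilon> * real n * ln (real n))"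
        using inf unfolding INFM_nat by blast
      have "n \<ge> 1" using n by simp
      then obtain K where K: "2^K \<le> n" "n < 2^(K+1)" using ex_power_ivl1[of 2 n] by auto
      have Kk: "K \<ge> k0 + 1"
      proof (rule ccontr)
        assume "\<not> K \<ge> k0 + 1"
        then have "(2::nat)^(K+1) \<le> 2^(k0+1)" by (intro power_increasing) auto
        moreover have "(2::nat)^(k0+1) < n" using n by simp
        ultimately show False using K(2) by linarith
      qed
      have "x \<in> Gset K"
      proof (rule ccontr)
        assume "x \<notin> Gset K"
        from key[OF x _ K(1) K(2) N0 this] Kk n have "trimmed_sum \<epsilon> n x < ereal (3 * \<epsilon> * real n * ln (real n))"
          by auto
        then show False using tr by simp
      qed
      then have "x \<in> A (K - 1)" unfolding A_def using Kk by simp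
      then show ?thesis using Kk by (intro exI[of _ "K - 1"]) auto
    qed
    then show "x \<in> limsup A" unfolding limsup_INF_SUP by auto
  qed
  then show ?thesis using nl by (rule null_sets_completion_subset)
qed

end
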